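(* Let $\mathfrak S$ be a commutative semiring. The set of all proper ideals, the set of all finitely generated (proper) ideals, and the set of all principal (proper) ideals of $\mathfrak S$, each endowed with the ideal topology, are connected spaces.
   Context: A semiring $(\mathfrak S,+,0,\cdot,1)$ has $(\mathfrak S,+,0)$ a commutative monoid, $(\mathfrak S,\cdot,1)$ a monoid, $0r=r0=0$, and two-sided distributivity; all semirings are commutative. An ideal is a nonempty proper subset closed under addition and under multiplication by elements of $\mathfrak S$. For a set $\sigma_{\mathfrak S}$ of ideals and an ideal $\mathfrak a$, $\mathfrak a^{\uparrow}=\{\mathfrak x\in\sigma_{\mathfrak S}\mid\mathfrak a\subseteq\mathfrak x\}$; the ideal topology on $\sigma_{\mathfrak S}$ has these sets as a subbasis of closed sets. *)

theory Defs
  imports "HOL-Analysis.Analysis"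
begin

text \<open>Commutative semirings: type class combination {comm_semiring_0, comm_monoid_mult}
  (commutative additive monoid, commutative multiplicative monoid with 1,
  0 absorbing, distributivity; 0 = 1 is allowed).\<close>

definition sr_ideal :: "'a::{comm_semiring_0,comm_monoid_mult} set \<Rightarrow> bool" where
  "sr_ideal I \<longleftrightarrow> I \<noteq> {} \<and> I \<noteq> UNIV \<and>
     (\<forall>x\<in>I. \<forall>y\<in>I. x + y \<in> I) \<and> (\<forall>r x. x \<in> I \<longrightarrow> r * x \<in> I)"

definition sr_span :: "'a::{comm_semiring_0,comm_monoid_mult} set \<Rightarrow> 'a set" where
  "sr_span X = {(\<Sum>x\<in>X. r x * x) | r. True}"

definition sr_fg_ideal :: "'a::{comm_semiring_0,comm_monoid_mult} set \<Rightarrow> bool" where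
  "sr_fg_ideal I \<longleftrightarrow> sr_ideal I \<and> (\<exists>X. finite X \<and> I = sr_span X)"

definition sr_principal_ideal :: "'a::{comm_semiring_0,comm_monoid_mult} set \<Rightarrow> bool" where
  "sr_principal_ideal I \<longleftrightarrow> sr_ideal I \<and> (\<exists>a. I = {r * a | r. True})"

definition up_set :: "'a set set \<Rightarrow> 'a set \<Rightarrow> 'a set set" where
  "up_set \<sigma> a = {x \<in> \<sigma>. a \<subseteq> x}"

text \<open>Ideal topology on \<sigma>: the sets a\<up> (a an ideal) form a subbasis of closed sets,
  i.e. their complements in \<sigma> (together with \<sigma> itself) form a subbasis of open sets.\<close>
definition ideal_topology :: "'a::{comm_semiring_0,comm_monoid_mult} set set \<Rightarrow> 'a set topology" where
  "ideal_topology \<sigma> = topology_generated_by (insert \<sigma> {\<sigma> - up_set \<sigma> a | a. sr_ideal a})"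

end

theory Submission
  imports Defs
begin

lemma gen_top_pt:
  assumes "\<forall>s\<in>S. s = {} \<or> z \<in> s" and "generate_topology_on S U"
  shows "U = {} \<or> z \<in> U"
  using assms(2)
proof (induction rule: generate_topology_on.induct)
  case (UN K) then show ?case by blast
next
  case (Basis s) then show ?case using assms(1) by blast
qed auto

lemma ideal_zero: "sr_ideal I \<Longrightarrow> 0 \<in> I"
  unfolding sr_ideal_def by (metis all_not_in_conv mult_zero_left)

lemma zero_ideal: "sr_ideal (I::'a::{comm_semiring_0,comm_monoid_mult} set) \<Longrightarrow> sr_ideal {0::'a}"
proof -
  assume I: "sr_ideal I"
  then obtain y where "y \<notin> I" unfolding sr_ideal_def by auto
  with ideal_zero[OF I] have "y \<noteq> 0" by auto
  then have "{0} \<noteq> (UNIV::'a set)"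
  proof (intro notI)
    assume "{0} = (UNIV::'a set)"
    then have "y \<in> {0}" by (simp only: UNIV_I)
    then show False using \<open>y \<noteq> 0\<close> by simp
  qed
  moreover have "\<forall>x\<in>{0::'a}. \<forall>y\<in>{0}. x + y \<in> {0}" by simp
  moreover have "\<forall>r x. x \<in> {0::'a} \<longrightarrow> r * x \<in> {0}" by simp
  ultimately show ?thesis unfolding sr_ideal_def by blast
qed

lemma conn_gen:
  fixes \<sigma> :: "'a::{comm_semiring_0,comm_monoid_mult} set set"
  assumes sub: "\<sigma> \<subseteq> Collect sr_ideal" and z: "\<sigma> \<noteq> {} \<Longrightarrow> {0} \<in> \<sigma>"
  shows "connected_space (ideal_topology \<sigma>)"
proof -
  let ?S = "insert \<sigma> {\<sigma> - up_set \<sigma> a | a. sr_ideal a}"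
  have P: "\<forall>s\<in>?S. s = {} \<or> {0} \<in> s"
  proof
    fix s assume "s \<in> ?S"
    then consider "s = \<sigma>" | a where "sr_ideal a" "s = \<sigma> - up_set \<sigma> a" by blast
    then show "s = {} \<or> {0} \<in> s"
    proof cases
      case 1 then show ?thesis using z by blast
    next
      case 2
      show ?thesis
      proof (cases "a \<subseteq> {0}")
        case True
        then have "a = {0}" using ideal_zero[OF 2(1)] by blast
        then have "up_set \<sigma> a = \<sigma>" using sub ideal_zero unfolding up_set_def by blast
        then show ?thesis using 2 by auto
      next
        case False
        then show ?thesis using 2 z unfolding up_set_def by auto
      qed
    qed
  qed
  have Q: "\<And>U. openin (ideal_topology \<sigma>) U \<Longrightarrow> U = {} \<or> {0} \<in> U"
    unfolding ideal_topology_def openin_topology_generated_by_iff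
    by (rule gen_top_pt[OF P])
  show ?thesis
    unfolding connected_space_def
  proof clarify
    fix E1 E2 assume "openin (ideal_topology \<sigma>) E1" "openin (ideal_topology \<sigma>) E2"
      "E1 \<inter> E2 = {}" "E1 \<noteq> {}" "E2 \<noteq> {}"
    then show False using Q by blast
  qed
qed

theorem corollary3p14:
  shows "connected_space (ideal_topology {I :: 'a::{comm_semiring_0,comm_monoid_mult} set. sr_ideal I})
       \<and> connected_space (ideal_topology {I :: 'a set. sr_fg_ideal I})
       \<and> connected_space (ideal_topology {I :: 'a set. sr_principal_ideal I})"
proof (intro conjI)
  show "connected_space (ideal_topology {I :: 'a set. sr_ideal I})"
    by (rule conn_gen) (auto intro: zero_ideal)
  show "connected_space (ideal_topology {I :: 'a set. sr_fg_ideal I})"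
  proof (rule conn_gen)
    show "{I :: 'a set. sr_fg_ideal I} \<subseteq> Collect sr_ideal" by (auto simp: sr_fg_ideal_def)
    assume "{I :: 'a set. sr_fg_ideal I} \<noteq> {}"
    then obtain I :: "'a set" where "sr_ideal I" by (auto simp: sr_fg_ideal_def)
    moreover have "sr_span ({}::'a set) = {0}" by (simp add: sr_span_def)
    ultimately show "{0} \<in> {I :: 'a set. sr_fg_ideal I}"
      unfolding sr_fg_ideal_def using zero_ideal[of I] by auto
  qed
  show "connected_space (ideal_topology {I :: 'a set. sr_principal_ideal I})"
  proof (rule conn_gen)
    show "{I :: 'a set. sr_principal_ideal I} \<subseteq> Collect sr_ideal" by (auto simp: sr_principal_ideal_def)
    assume "{I :: 'a set. sr_principal_ideal I} \<noteq> {}"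
    then obtain I :: "'a set" where "sr_ideal I" by (auto simp: sr_principal_ideal_def)
    moreover have "\<exists>a. ({0}::'a set) = {r * a | r. True}" by (rule exI[of _ 0]) simp
    ultimately show "{0} \<in> {I :: 'a set. sr_principal_ideal I}"
      unfolding sr_principal_ideal_def using zero_ideal[of I] by auto
  qed
qed

end
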